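(* Let $K\ge1$, $f_0^-\equiv0$, and let $f_1^-,\dots,f_K^-:\mathcal{S}\times\mathcal{A}\to\mathbb{R}$ and $b_1,\dots,b_K:\mathcal{S}\times\mathcal{A}\to[0,\infty)$ satisfy, for all $k\in\{1,\dots,K\}$ and all $(s,a)$, $$f_k^-(s,a)\le(\mathcal{T}f_{k-1}^-)(s,a)\le f_k^-(s,a)+2b_k(s,a).$$ For each $k$ let $\pi_k$ be a deterministic greedy policy w.r.t. $f_k^-$, i.e. $\pi_k(s)\in\arg\max_a f_k^-(s,a)$. Then for every (stationary) policy $\pi_{\mathrm{cp}}$, $$J_K(\pi_{\mathrm{cp}})-J_K(\pi_{K:1})\le2\sum_{t=0}^{K-1}\gamma^t\,\mathbb{E}_{(s,a)\sim d_t^{\pi_{\mathrm{cp}}}}[b_{K-t}(s,a)].$$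
   Context: MDP $(\mathcal{S},\mathcal{A},P,R,\gamma,d_0)$ with finite $\mathcal{S},\mathcal{A}$, reward $R:\mathcal{S}\times\mathcal{A}\to[0,R_{\max}]$, $\gamma\in[0,1)$. The Bellman optimality operator is $(\mathcal{T}f)(s,a)=R(s,a)+\gamma\mathbb{E}_{s'\sim P(\cdot\mid s,a)}[\max_{a'}f(s',a')]$. The non-stationary policy $\pi_{K:1}$ generates $s_0\sim d_0$, $a_t\sim\pi_{K-t}(\cdot\mid s_t)$, $r_t=R(s_t,a_t)$, $s_{t+1}\sim P(\cdot\mid s_t,a_t)$ for $t=0,\dots,K-1$, and $J_K(\pi_{K:1})=\mathbb{E}[\sum_{t=0}^{K-1}\gamma^tr_t]$. For a stationary policy $\pi$, $J_K(\pi)$ is the same quantity with all $\pi_k=\pi$, and $d_t^\pi(s,a)=\Pr_\pi[s_t=s,a_t=a]$. *)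

theory Defs
  imports Complex_Main
begin

text \<open>Finite MDP. States of type 's::finite, actions of type 'a::finite.
  Transition kernel P s a s' = Pr[s' | s, a]; initial distribution d0;
  (stochastic) policies are functions pol s a = Pr[a | s].\<close>

definition is_dist :: "('x::finite \<Rightarrow> real) \<Rightarrow> bool" where
  "is_dist p \<longleftrightarrow> (\<forall>x. 0 \<le> p x) \<and> (\<Sum>x\<in>UNIV. p x) = 1"

definition valid_mdp :: "('s::finite \<Rightarrow> 'a::finite \<Rightarrow> 's \<Rightarrow> real) \<Rightarrow> ('s \<Rightarrow> real) \<Rightarrow> bool" where
  "valid_mdp P d0 \<longleftrightarrow> (\<forall>s a. is_dist (P s a)) \<and> is_dist d0"

definition is_policy :: "('s::finite \<Rightarrow> 'a::finite \<Rightarrow> real) \<Rightarrow> bool" where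
  "is_policy pol \<longleftrightarrow> (\<forall>s. is_dist (pol s))"

definition det_pol :: "('s \<Rightarrow> 'a) \<Rightarrow> 's \<Rightarrow> 'a \<Rightarrow> real" where
  "det_pol p s a = (if a = p s then 1 else 0)"

definition bellman ::
  "('s::finite \<Rightarrow> 'a::finite \<Rightarrow> 's \<Rightarrow> real) \<Rightarrow> ('s \<Rightarrow> 'a \<Rightarrow> real) \<Rightarrow> real
   \<Rightarrow> ('s \<Rightarrow> 'a \<Rightarrow> real) \<Rightarrow> 's \<Rightarrow> 'a \<Rightarrow> real" where
  "bellman P R \<gamma> f s a = R s a + \<gamma> * (\<Sum>s'\<in>UNIV. P s a s' * (MAX a'. f s' a'))"

fun state_dist ::
  "('s::finite \<Rightarrow> 'a::finite \<Rightarrow> 's \<Rightarrow> real) \<Rightarrow> ('s \<Rightarrow> real) \<Rightarrow> (nat \<Rightarrow> 's \<Rightarrow> 'a \<Rightarrow> real)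
   \<Rightarrow> nat \<Rightarrow> 's \<Rightarrow> real" where
  "state_dist P d0 pols 0 s = d0 s"
| "state_dist P d0 pols (Suc t) s' =
     (\<Sum>s\<in>UNIV. \<Sum>a\<in>UNIV. state_dist P d0 pols t s * pols t s a * P s a s')"

definition occ ::
  "('s::finite \<Rightarrow> 'a::finite \<Rightarrow> 's \<Rightarrow> real) \<Rightarrow> ('s \<Rightarrow> real) \<Rightarrow> (nat \<Rightarrow> 's \<Rightarrow> 'a \<Rightarrow> real)
   \<Rightarrow> nat \<Rightarrow> 's \<Rightarrow> 'a \<Rightarrow> real" where
  "occ P d0 pols t s a = state_dist P d0 pols t s * pols t s a"

definition J ::
  "('s::finite \<Rightarrow> 'a::finite \<Rightarrow> 's \<Rightarrow> real) \<Rightarrow> ('s \<Rightarrow> 'a \<Rightarrow> real) \<Rightarrow> real \<Rightarrow> ('s \<Rightarrow> real)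
   \<Rightarrow> nat \<Rightarrow> (nat \<Rightarrow> 's \<Rightarrow> 'a \<Rightarrow> real) \<Rightarrow> real" where
  "J P R \<gamma> d0 K pols = (\<Sum>t<K. \<gamma>^t * (\<Sum>s\<in>UNIV. \<Sum>a\<in>UNIV. occ P d0 pols t s a * R s a))"

definition nonstat :: "nat \<Rightarrow> (nat \<Rightarrow> 's \<Rightarrow> 'a) \<Rightarrow> nat \<Rightarrow> 's \<Rightarrow> 'a \<Rightarrow> real" where
  "nonstat K pis t = det_pol (pis (K - t))"

end

theory Submission
  imports Defs
begin

lemma telescope: "(\<Sum>t<K. (\<gamma>::real)^t * (x t - \<gamma> * x (Suc t))) = x 0 - \<gamma>^K * x K"
  by (induction K) (auto simp: algebra_simps)

lemma det_pol_sum: "(\<Sum>a\<in>UNIV. det_pol (p :: 's \<Rightarrow> 'a::finite) s a * h a) = (h (p s) :: real)"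
proof -
  have "(\<lambda>a. det_pol p s a * h a) = (\<lambda>a. if a = p s then h a else 0)"
    by (auto simp: det_pol_def)
  then show ?thesis unfolding \<open>(\<lambda>a. det_pol p s a * h a) = _\<close> by simp
qed

lemma state_dist_nonneg:
  assumes "\<forall>s a s'. 0 \<le> P s a s'" "\<forall>s. 0 \<le> d0 s" "\<forall>t s a. 0 \<le> pols t s a"
  shows "0 \<le> state_dist P d0 pols t s"
  by (induction t arbitrary: s) (auto intro!: sum_nonneg simp: assms)

lemma state_dist_next:
  "(\<Sum>s'\<in>UNIV. state_dist P d0 pols (Suc t) s' * h s') =
   (\<Sum>s\<in>UNIV. \<Sum>a\<in>UNIV. state_dist P d0 pols t s * pols t s a * (\<Sum>s'\<in>UNIV. P s a s' * h s'))"
proof -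
  have "(\<Sum>s'\<in>UNIV. state_dist P d0 pols (Suc t) s' * h s') =
     (\<Sum>s'\<in>UNIV. \<Sum>s\<in>UNIV. \<Sum>a\<in>UNIV. state_dist P d0 pols t s * pols t s a * (P s a s' * h s'))"
    by (simp add: sum_distrib_right mult.assoc)
  also have "\<dots> = (\<Sum>s\<in>UNIV. \<Sum>s'\<in>UNIV. \<Sum>a\<in>UNIV. state_dist P d0 pols t s * pols t s a * (P s a s' * h s'))"
    by (rule sum.swap)
  also have "\<dots> = (\<Sum>s\<in>UNIV. \<Sum>a\<in>UNIV. \<Sum>s'\<in>UNIV. state_dist P d0 pols t s * pols t s a * (P s a s' * h s'))"
    by (rule sum.cong[OF refl], rule sum.swap)
  also have "\<dots> = (\<Sum>s\<in>UNIV. \<Sum>a\<in>UNIV. state_dist P d0 pols t s * pols t s a * (\<Sum>s'\<in>UNIV. P s a s' * h s'))"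
    by (simp add: sum_distrib_left)
  finally show ?thesis .
qed

theorem mainTheorem13:
  fixes P :: "'s::finite \<Rightarrow> 'a::finite \<Rightarrow> 's \<Rightarrow> real"
    and R :: "'s \<Rightarrow> 'a \<Rightarrow> real" and Rmax \<gamma> :: real and d0 :: "'s \<Rightarrow> real"
    and K :: nat
    and f :: "nat \<Rightarrow> 's \<Rightarrow> 'a \<Rightarrow> real" and b :: "nat \<Rightarrow> 's \<Rightarrow> 'a \<Rightarrow> real"
    and pis :: "nat \<Rightarrow> 's \<Rightarrow> 'a" and pi_cp :: "'s \<Rightarrow> 'a \<Rightarrow> real"
  assumes mdp: "valid_mdp P d0"
    and R_range: "\<forall>s a. 0 \<le> R s a \<and> R s a \<le> Rmax"
    and gamma: "0 \<le> \<gamma>" "\<gamma> < 1"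
    and K: "1 \<le> K"
    and f0: "f 0 = (\<lambda>s a. 0)"
    and b_nonneg: "\<forall>k\<in>{1..K}. \<forall>s a. 0 \<le> b k s a"
    and lower: "\<forall>k\<in>{1..K}. \<forall>s a. f k s a \<le> bellman P R \<gamma> (f (k - 1)) s a"
    and upper: "\<forall>k\<in>{1..K}. \<forall>s a. bellman P R \<gamma> (f (k - 1)) s a \<le> f k s a + 2 * b k s a"
    and greedy: "\<forall>k\<in>{1..K}. \<forall>s. is_arg_max (f k s) (\<lambda>_. True) (pis k s)"
    and cp: "is_policy pi_cp"
  shows "J P R \<gamma> d0 K (\<lambda>_. pi_cp) - J P R \<gamma> d0 K (nonstat K pis)
         \<le> 2 * (\<Sum>t<K. \<gamma>^t * (\<Sum>s\<in>UNIV. \<Sum>a\<in>UNIV. occ P d0 (\<lambda>_. pi_cp) t s a * b (K - t) s a))"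
proof -
  define g where "g k s = (MAX a. f k s a)" for k s
  have Pnn: "\<forall>s a s'. 0 \<le> P s a s'" and dnn: "\<forall>s. 0 \<le> d0 s"
    using mdp by (auto simp: valid_mdp_def is_dist_def)
  have cpnn: "\<forall>s a. 0 \<le> pi_cp s a" and cpsum: "\<And>s. (\<Sum>a\<in>UNIV. pi_cp s a) = 1"
    using cp by (auto simp: is_policy_def is_dist_def)
  have g0: "g 0 s = 0" for s using f0 by (simp add: g_def)
  have fg: "f k s a \<le> g k s" for k s a unfolding g_def by (rule Max_ge) auto
  have gk: "g k s = f k s (pis k s)" if "k \<in> {1..K}" for k s
  proof -
    have "\<forall>y. f k s y \<le> f k s (pis k s)"
      using greedy that by (auto simp: is_arg_max_def not_less)
    then show ?thesis unfolding g_def by (intro Max_eqI) auto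
  qed
  have bell: "bellman P R \<gamma> (f k) s a = R s a + \<gamma> * (\<Sum>s'\<in>UNIV. P s a s' * g k s')" for k s a
    unfolding bellman_def g_def by simp
  define D where "D = state_dist P d0 (\<lambda>_. pi_cp)"
  define D' where "D' = state_dist P d0 (nonstat K pis)"
  have Dnn: "0 \<le> D t s" for t s unfolding D_def
    by (rule state_dist_nonneg) (use Pnn dnn cpnn in auto)
  have D'nn: "0 \<le> D' t s" for t s unfolding D'_def
    by (rule state_dist_nonneg) (use Pnn dnn in \<open>auto simp: nonstat_def det_pol_def\<close>)
  define x where "x t = (\<Sum>s\<in>UNIV. D t s * g (K - t) s)" for t
  define y where "y t = (\<Sum>s\<in>UNIV. D' t s * g (K - t) s)" for t
  define B where "B t = (\<Sum>s\<in>UNIV. \<Sum>a\<in>UNIV. occ P d0 (\<lambda>_. pi_cp) t s a * b (K - t) s a)" for t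
  define rc where "rc t = (\<Sum>s\<in>UNIV. \<Sum>a\<in>UNIV. occ P d0 (\<lambda>_. pi_cp) t s a * R s a)" for t
  define rn where "rn t = (\<Sum>s\<in>UNIV. \<Sum>a\<in>UNIV. occ P d0 (nonstat K pis) t s a * R s a)" for t
  have cp_step: "rc t \<le> x t - \<gamma> * x (Suc t) + 2 * B t" if "t < K" for t
  proof -
    have k: "K - t \<in> {1..K}" and km: "K - t - 1 = K - Suc t" using that by auto
    have pw: "R s a \<le> g (K - t) s - \<gamma> * (\<Sum>s'\<in>UNIV. P s a s' * g (K - Suc t) s') + 2 * b (K - t) s a" for s a
    proof -
      have "bellman P R \<gamma> (f (K - t - 1)) s a \<le> f (K - t) s a + 2 * b (K - t) s a"
        by (rule upper[rule_format, OF k])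
      then show ?thesis using fg[of "K - t" s a] bell[of "K - t - 1" s a] km by simp
    qed
    have xs: "x (Suc t) = (\<Sum>s\<in>UNIV. \<Sum>a\<in>UNIV. D t s * pi_cp s a * (\<Sum>s'\<in>UNIV. P s a s' * g (K - Suc t) s'))"
      unfolding x_def D_def by (rule state_dist_next)
    have xt: "x t = (\<Sum>s\<in>UNIV. \<Sum>a\<in>UNIV. D t s * pi_cp s a * g (K - t) s)"
    proof -
      have "D t s * g (K - t) s = (\<Sum>a\<in>UNIV. D t s * pi_cp s a * g (K - t) s)" for s
      proof -
        have "(\<Sum>a\<in>UNIV. D t s * pi_cp s a * g (K - t) s) = (\<Sum>a\<in>UNIV. pi_cp s a) * (D t s * g (K - t) s)"
        proof -
          have "(\<Sum>a\<in>UNIV. D t s * pi_cp s a * g (K - t) s) = (\<Sum>a\<in>UNIV. pi_cp s a * (D t s * g (K - t) s))"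
            by (rule sum.cong) (simp_all add: mult_ac)
          also have "\<dots> = (\<Sum>a\<in>UNIV. pi_cp s a) * (D t s * g (K - t) s)"
            by (rule sum_distrib_right[symmetric])
          finally show ?thesis .
        qed
        then show ?thesis using cpsum by simp
      qed
      then show ?thesis unfolding x_def by simp
    qed
    have "rc t \<le> (\<Sum>s\<in>UNIV. \<Sum>a\<in>UNIV. D t s * pi_cp s a * (g (K - t) s - \<gamma> * (\<Sum>s'\<in>UNIV. P s a s' * g (K - Suc t) s') + 2 * b (K - t) s a))"
      unfolding rc_def occ_def D_def[symmetric]
      by (intro sum_mono mult_left_mono pw mult_nonneg_nonneg Dnn) (use cpnn in auto)
    also have "\<dots> = x t - \<gamma> * x (Suc t) + 2 * B t"
    proof -
      have e: "D t s * pi_cp s a * (g (K - t) s - \<gamma> * (\<Sum>s'\<in>UNIV. P s a s' * g (K - Suc t) s') + 2 * b (K - t) s a)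
        = D t s * pi_cp s a * g (K - t) s - \<gamma> * (D t s * pi_cp s a * (\<Sum>s'\<in>UNIV. P s a s' * g (K - Suc t) s'))
          + 2 * (D t s * pi_cp s a * b (K - t) s a)" for s a
        by (simp add: algebra_simps)
      show ?thesis
        unfolding xs xt B_def occ_def D_def[symmetric] e
        by (simp only: sum_subtractf sum.distrib sum_distrib_left[symmetric])
    qed
    finally show ?thesis .
  qed
  have ns_step: "y t - \<gamma> * y (Suc t) \<le> rn t" if "t < K" for t
  proof -
    have k: "K - t \<in> {1..K}" and km: "K - t - 1 = K - Suc t" using that by auto
    have pw: "g (K - t) s - \<gamma> * (\<Sum>s'\<in>UNIV. P s (pis (K - t) s) s' * g (K - Suc t) s') \<le> R s (pis (K - t) s)" for s
    proof -
      have "f (K - t) s (pis (K - t) s) \<le> bellman P R \<gamma> (f (K - t - 1)) s (pis (K - t) s)"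
        by (rule lower[rule_format, OF k])
      then show ?thesis using gk[OF k, of s] bell[of "K - t - 1" s "pis (K - t) s"] km by simp
    qed
    have ys: "y (Suc t) = (\<Sum>s\<in>UNIV. D' t s * (\<Sum>s'\<in>UNIV. P s (pis (K - t) s) s' * g (K - Suc t) s'))"
    proof -
      have "y (Suc t) = (\<Sum>s\<in>UNIV. \<Sum>a\<in>UNIV. D' t s * det_pol (pis (K - t)) s a * (\<Sum>s'\<in>UNIV. P s a s' * g (K - Suc t) s'))"
        unfolding y_def D'_def by (subst state_dist_next) (simp add: nonstat_def)
      also have "\<dots> = (\<Sum>s\<in>UNIV. D' t s * (\<Sum>a\<in>UNIV. det_pol (pis (K - t)) s a * (\<Sum>s'\<in>UNIV. P s a s' * g (K - Suc t) s')))"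
        by (simp add: sum_distrib_left mult.assoc)
      finally show ?thesis by (simp only: det_pol_sum)
    qed
    have rnt: "rn t = (\<Sum>s\<in>UNIV. D' t s * R s (pis (K - t) s))"
    proof -
      have "rn t = (\<Sum>s\<in>UNIV. D' t s * (\<Sum>a\<in>UNIV. det_pol (pis (K - t)) s a * R s a))"
        unfolding rn_def occ_def D'_def[symmetric] by (simp add: sum_distrib_left mult.assoc nonstat_def)
      then show ?thesis by (simp only: det_pol_sum)
    qed
    have "y t - \<gamma> * y (Suc t) = (\<Sum>s\<in>UNIV. D' t s * (g (K - t) s - \<gamma> * (\<Sum>s'\<in>UNIV. P s (pis (K - t) s) s' * g (K - Suc t) s')))"
    proof -
      have e: "D' t s * (g (K - t) s - \<gamma> * (\<Sum>s'\<in>UNIV. P s (pis (K - t) s) s' * g (K - Suc t) s'))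
        = D' t s * g (K - t) s - \<gamma> * (D' t s * (\<Sum>s'\<in>UNIV. P s (pis (K - t) s) s' * g (K - Suc t) s'))" for s
        by (simp add: algebra_simps)
      show ?thesis unfolding ys unfolding y_def e
        by (simp only: sum_subtractf sum_distrib_left[symmetric])
    qed
    also have "\<dots> \<le> rn t" unfolding rnt
      by (intro sum_mono mult_left_mono pw D'nn)
    finally show ?thesis .
  qed
  have x0: "x 0 = (\<Sum>s\<in>UNIV. d0 s * g K s)" and xK: "x K = 0"
    by (simp_all add: x_def D_def g0)
  have y0: "y 0 = (\<Sum>s\<in>UNIV. d0 s * g K s)" and yK: "y K = 0"
    by (simp_all add: y_def D'_def g0)
  have "J P R \<gamma> d0 K (\<lambda>_. pi_cp) = (\<Sum>t<K. \<gamma>^t * rc t)" unfolding J_def rc_def ..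
  also have "\<dots> \<le> (\<Sum>t<K. \<gamma>^t * (x t - \<gamma> * x (Suc t)) + \<gamma>^t * (2 * B t))"
    by (intro sum_mono) (use cp_step gamma in \<open>auto simp: distrib_left[symmetric] intro!: mult_left_mono\<close>)
  also have "\<dots> = (\<Sum>s\<in>UNIV. d0 s * g K s) + 2 * (\<Sum>t<K. \<gamma>^t * B t)"
    by (simp only: sum.distrib telescope x0 xK sum_distrib_left) (simp add: mult_ac)
  finally have c1: "J P R \<gamma> d0 K (\<lambda>_. pi_cp) \<le> (\<Sum>s\<in>UNIV. d0 s * g K s) + 2 * (\<Sum>t<K. \<gamma>^t * B t)" .
  have "(\<Sum>s\<in>UNIV. d0 s * g K s) = (\<Sum>t<K. \<gamma>^t * (y t - \<gamma> * y (Suc t)))"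
    by (simp add: telescope y0 yK)
  also have "\<dots> \<le> (\<Sum>t<K. \<gamma>^t * rn t)"
    by (intro sum_mono mult_left_mono) (use ns_step gamma in auto)
  also have "\<dots> = J P R \<gamma> d0 K (nonstat K pis)" unfolding J_def rn_def ..
  finally have c2: "(\<Sum>s\<in>UNIV. d0 s * g K s) \<le> J P R \<gamma> d0 K (nonstat K pis)" .
  have "J P R \<gamma> d0 K (\<lambda>_. pi_cp) - J P R \<gamma> d0 K (nonstat K pis) \<le> 2 * (\<Sum>t<K. \<gamma>^t * B t)"
    using c1 c2 by linarith
  then show ?thesis by (simp only: B_def)
qed

end
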